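(* Let $\{e_k:k\in\mathbb N\}$ be an orthonormal basis of $X$, and for every $k\in\mathbb N$ let $\mu_k$ be a real valued Borel measure on $X$ such that, setting $M_n(B):=\sum_{k=1}^n\mu_k(B)e_k$ for $n\in\mathbb N$ and Borel $B\subset X$, we have $\sup_{n\in\mathbb N}|M_n|(X)=:C<+\infty$. Then there exists $M\in\mathcal M(X,X)$ with $|M|(X)\le C$ and $\langle M(B),e_k\rangle=\mu_k(B)$ for all $k\in\mathbb N$ and Borel $B$; in particular $M(B)=\sum_{k=1}^\infty\mu_k(B)e_k$ for every Borel set $B$.
   Context: $X$ is a separable real Hilbert space. $\mathcal M(X,X)$ is the space of countably additive $X$-valued Borel measures $m$ on $X$ with finite total variation, where for an $X$-valued Borel measure $m$, $|m|(B):=\sup\sum_n\|m(B_n)\|$, the supremum over all at most countable partitions of $B$ into pairwise disjoint Borel sets. *)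

theory Defs
  imports "HOL-Analysis.Analysis"
begin

definition borel_vector_measure :: "('a::topological_space set \<Rightarrow> 'b::real_normed_vector) \<Rightarrow> bool" where
  "borel_vector_measure m \<longleftrightarrow>
     (\<forall>B :: nat \<Rightarrow> 'a set. range B \<subseteq> sets borel \<longrightarrow> disjoint_family B \<longrightarrow>
        (\<lambda>n. m (B n)) sums m (\<Union>n. B n))"

text \<open>Total variation: supremum over (at most) countable Borel partitions of A
(finite partitions are included by padding with empty sets).\<close>
definition total_variation :: "('a::topological_space set \<Rightarrow> 'b::real_normed_vector) \<Rightarrow> 'a set \<Rightarrow> ennreal" where
  "total_variation m A =
     (SUP B \<in> {B :: nat \<Rightarrow> 'a set. range B \<subseteq> sets borel \<and> disjoint_family B \<and> (\<Union>n. B n) = A}.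
        (\<Sum>n. ennreal (norm (m (B n)))))"

definition orthonormal_basis :: "(nat \<Rightarrow> 'a::real_inner) \<Rightarrow> bool" where
  "orthonormal_basis e \<longleftrightarrow>
     (\<forall>i j. e i \<bullet> e j = (if i = j then 1 else 0)) \<and> closure (span (range e)) = UNIV"

end

theory Submission imports Defs begin

lemma tv_fin:
  fixes m :: "'a::topological_space set \<Rightarrow> 'b::real_normed_vector"
    and J :: nat
  assumes B: "\<And>j. B j \<in> sets borel" and d: "disjoint_family B"
  shows "ennreal (\<Sum>j<J. norm (m (B j))) \<le> total_variation m UNIV"
proof -
  define P where "P i = (if i < J then B i else if i = J then UNIV - (\<Union>j<J. B j) else {})" for i
  have Pb: "range P \<subseteq> sets borel"
  proof -
    have "(\<Union>j<J. B j) \<in> sets borel" using B by auto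
    then have U: "UNIV - (\<Union>j<J. B j) \<in> sets borel" by (metis borel_comp Compl_eq_Diff_UNIV)
    have "P i \<in> sets borel" for i
      unfolding P_def by (cases "i < J"; cases "i = J") (use B U in auto)
    then show ?thesis by auto
  qed
  have Pd: "disjoint_family P"
    using d unfolding disjoint_family_on_def P_def by auto
  have Pu: "(\<Union>i. P i) = UNIV"
  proof -
    { fix x
      have "x \<in> P J \<or> (\<exists>j<J. x \<in> P j)" by (auto simp: P_def) 
      hence "x \<in> (\<Union>i. P i)" by blast }
    thus ?thesis by blast
  qed
  have "ennreal (\<Sum>j<J. norm (m (B j))) = (\<Sum>j<J. ennreal (norm (m (P j))))"
    by (simp add: P_def)
  also have "\<dots> \<le> (\<Sum>i. ennreal (norm (m (P i))))"
    by (rule sum_le_suminf) auto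
  also have "\<dots> \<le> total_variation m UNIV"
    unfolding total_variation_def using Pb Pd Pu by (intro SUP_upper) auto
  finally show ?thesis .
qed

lemma pyth:
  fixes e :: "nat \<Rightarrow> 'a::real_inner"
  assumes o: "\<forall>i j. e i \<bullet> e j = (if i = j then 1 else 0)" and F: "finite F"
  shows "(norm (\<Sum>k\<in>F. a k *\<^sub>R e k))^2 = (\<Sum>k\<in>F. (a k)^2)"
proof -
  have "(norm (\<Sum>k\<in>F. a k *\<^sub>R e k))^2 = (\<Sum>k\<in>F. a k * (\<Sum>j\<in>F. (if j = k then a j else 0)))"
    by (simp add: power2_norm_eq_inner inner_sum_left inner_sum_right o if_distrib cong: if_cong)
  also have "\<dots> = (\<Sum>k\<in>F. (a k)^2)"
    using F by (simp add: power2_eq_square sum.delta)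
  finally show ?thesis .
qed

lemma total:
  fixes e :: "nat \<Rightarrow> 'a::real_inner"
  assumes c: "closure (span (range e)) = UNIV" and z: "\<And>k. x \<bullet> e k = 0"
  shows "x = 0"
proof -
  have "span (range e) \<subseteq> {y. x \<bullet> y = 0}"
    by (rule span_minimal) (use z subspace_hyperplane in auto)
  hence "closure (span (range e)) \<subseteq> {y. x \<bullet> y = 0}"
    by (rule closure_minimal) (rule closed_hyperplane)
  hence "x \<bullet> x = 0" using c by blast
  thus ?thesis by simp
qed

lemma summable_Cauchy_gen:
  fixes f :: "nat \<Rightarrow> 'a::{real_normed_vector, complete_space}"
  assumes r: "\<forall>e>0. \<exists>N. \<forall>m\<ge>N. \<forall>n. norm (sum f {m..<n}) < e"
  shows "summable f"
  unfolding summable_iff_convergent Cauchy_convergent_iff [symmetric] Cauchy_iff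
proof clarify
  fix e :: real
  assume "0 < e"
  with r obtain N where N: "\<And>m n. m \<ge> N \<Longrightarrow> norm (sum f {m..<n}) < e"
    by blast
  have "norm (sum f {..<m} - sum f {..<n}) < e" if "m\<ge>N" "n\<ge>N" for m n
  proof (cases m n rule: linorder_class.le_cases)
    assume "m \<le> n"
    then show ?thesis
      by (metis N finite_lessThan lessThan_minus_lessThan lessThan_subset_iff norm_minus_commute sum_diff \<open>m\<ge>N\<close>)
  next
    assume "n \<le> m"
    then show ?thesis
      by (metis N finite_lessThan lessThan_minus_lessThan lessThan_subset_iff sum_diff \<open>n\<ge>N\<close>)
  qed
  then show "\<exists>M. \<forall>m\<ge>M. \<forall>n\<ge>M. norm (sum f {..<m} - sum f {..<n}) < e"
    by blast
qed

lemma summable_norm_cancel_gen: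
  fixes f :: "nat \<Rightarrow> 'a::{real_normed_vector, complete_space}"
  assumes "summable (\<lambda>n. norm (f n))"
  shows "summable f"
proof (rule summable_Cauchy_gen, intro allI impI)
  fix e :: real assume "e > 0"
  with assms obtain N where N: "\<And>m n. m \<ge> N \<Longrightarrow> norm (\<Sum>k\<in>{m..<n}. norm (f k)) < e"
    unfolding summable_Cauchy by blast
  show "\<exists>N. \<forall>m\<ge>N. \<forall>n. norm (sum f {m..<n}) < e"
  proof (intro exI allI impI)
    fix m n assume "N \<le> m"
    have "norm (sum f {m..<n}) \<le> (\<Sum>k\<in>{m..<n}. norm (f k))" by (rule norm_sum)
    also have "\<dots> \<le> norm (\<Sum>k\<in>{m..<n}. norm (f k))" by simp
    also have "\<dots> < e" using N \<open>N \<le> m\<close> by blast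
    finally show "norm (sum f {m..<n}) < e" .
  qed
qed

theorem lemma2p8:
  fixes e :: "nat \<Rightarrow> 'a::{real_inner, complete_space}"
    and \<mu> :: "nat \<Rightarrow> 'a set \<Rightarrow> real"
  assumes "orthonormal_basis e"
    and "\<And>k. borel_vector_measure (\<mu> k)"
    and "(SUP n. total_variation (\<lambda>B. \<Sum>k<n. \<mu> k B *\<^sub>R e k) UNIV) < \<infinity>"
  shows "\<exists>M :: 'a set \<Rightarrow> 'a.
           borel_vector_measure M \<and> total_variation M UNIV < \<infinity> \<and>
           total_variation M UNIV \<le> (SUP n. total_variation (\<lambda>B. \<Sum>k<n. \<mu> k B *\<^sub>R e k) UNIV) \<and>
           (\<forall>k. \<forall>B \<in> sets borel. M B \<bullet> e k = \<mu> k B) \<and>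
           (\<forall>B \<in> sets borel. (\<lambda>k. \<mu> k B *\<^sub>R e k) sums M B)"
proof -
  define Mn where "Mn n B = (\<Sum>k<n. \<mu> k B *\<^sub>R e k)" for n B
  define C' where "C' = (SUP n. total_variation (Mn n) UNIV)"
  define c where "c = enn2real C'"
  have orth: "\<forall>i j. e i \<bullet> e j = (if i = j then 1 else 0)"
    and cl: "closure (span (range e)) = UNIV"
    using assms(1) unfolding orthonormal_basis_def by auto
  have Cfin: "C' < top" using assms(3) unfolding C'_def Mn_def by simp
  have Cc: "ennreal c = C'" unfolding c_def using Cfin by (simp add: ennreal_enn2real)
  have bound_fin: "(\<Sum>j<J. norm (Mn n (B j))) \<le> c"
    if B: "\<And>j. B j \<in> sets borel" and d: "disjoint_family B" for B :: "nat \<Rightarrow> 'a set" and n J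
  proof -
    have "ennreal (\<Sum>j<J. norm (Mn n (B j))) \<le> total_variation (Mn n) UNIV"
      by (rule tv_fin[OF B d])
    also have "\<dots> \<le> C'" unfolding C'_def by (rule SUP_upper) auto
    finally have "enn2real (ennreal (\<Sum>j<J. norm (Mn n (B j)))) \<le> c"
      unfolding c_def using Cfin by (rule enn2real_mono)
    thus ?thesis by (simp add: sum_nonneg)
  qed
  have nbound: "norm (Mn n B) \<le> c" if B: "B \<in> sets borel" for B n
  proof -
    let ?F = "\<lambda>j::nat. if j = 0 then B else {}"
    have "(\<Sum>j<1. norm (Mn n (?F j))) \<le> c"
      by (rule bound_fin) (use B in \<open>auto simp: disjoint_family_on_def\<close>)
    thus ?thesis by simp
  qed
  have sq: "summable (\<lambda>k. (\<mu> k B)^2)" if B: "B \<in> sets borel" for B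
  proof (rule summableI_nonneg_bounded)
    fix n
    have "(\<Sum>k<n. (\<mu> k B)^2) = (norm (Mn n B))^2"
      unfolding Mn_def by (rule pyth[OF orth, symmetric]) simp
    also have "\<dots> \<le> c^2" by (rule power_mono[OF nbound[OF B]]) simp
    finally show "(\<Sum>k<n. (\<mu> k B)^2) \<le> c^2" .
  qed simp
  have summ: "summable (\<lambda>k. \<mu> k B *\<^sub>R e k)" if B: "B \<in> sets borel" for B
  proof (rule summable_Cauchy_gen, intro allI impI)
    fix \<epsilon> :: real assume \<epsilon>: "\<epsilon> > 0"
    then have "\<epsilon>^2 > 0" by simp
    with sq[OF B] obtain N where N: "\<And>m n. m \<ge> N \<Longrightarrow> norm (\<Sum>k\<in>{m..<n}. (\<mu> k B)^2) < \<epsilon>^2"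
      unfolding summable_Cauchy by blast
    show "\<exists>N. \<forall>m\<ge>N. \<forall>n. norm (\<Sum>k\<in>{m..<n}. \<mu> k B *\<^sub>R e k) < \<epsilon>"
    proof (intro exI allI impI)
      fix m n assume "N \<le> m"
      have "(norm (\<Sum>k\<in>{m..<n}. \<mu> k B *\<^sub>R e k))^2 = (\<Sum>k\<in>{m..<n}. (\<mu> k B)^2)"
        by (rule pyth[OF orth]) simp
      also have "\<dots> \<le> norm (\<Sum>k\<in>{m..<n}. (\<mu> k B)^2)" by simp
      also have "\<dots> < \<epsilon>^2" using N \<open>N \<le> m\<close> by blast
      finally show "norm (\<Sum>k\<in>{m..<n}. \<mu> k B *\<^sub>R e k) < \<epsilon>"
        by (rule power2_less_imp_less) (use \<epsilon> in simp)
    qed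
  qed
  define M where "M B = (\<Sum>k. \<mu> k B *\<^sub>R e k)" for B
  have Msums: "(\<lambda>k. \<mu> k B *\<^sub>R e k) sums M B" if "B \<in> sets borel" for B
    unfolding M_def using summ[OF that] by (rule summable_sums)
  have Mlim: "(\<lambda>n. Mn n B) \<longlonglongrightarrow> M B" if "B \<in> sets borel" for B
    using Msums[OF that] unfolding sums_def Mn_def .
  have Minner: "M B \<bullet> e k = \<mu> k B" if B: "B \<in> sets borel" for B k
  proof -
    have "(\<lambda>j. (\<mu> j B *\<^sub>R e j) \<bullet> e k) sums (M B \<bullet> e k)"
      by (rule bounded_linear.sums[OF bounded_linear_inner_left Msums[OF B]])
    moreover have "(\<lambda>j. (\<mu> j B *\<^sub>R e j) \<bullet> e k) = (\<lambda>j. if j = k then \<mu> j B else 0)"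
      using orth by auto
    ultimately have "(\<lambda>j. if j = k then \<mu> j B else 0) sums (M B \<bullet> e k)" by simp
    moreover have "(\<lambda>j. if j = k then \<mu> j B else 0) sums \<mu> k B" by (rule sums_single)
    ultimately show ?thesis by (rule sums_unique2)
  qed
  have Mfin: "(\<Sum>j<J. norm (M (B j))) \<le> c"
    if B: "\<And>j. B j \<in> sets borel" and d: "disjoint_family B" for B :: "nat \<Rightarrow> 'a set" and J
  proof -
    have "(\<lambda>n. \<Sum>j<J. norm (Mn n (B j))) \<longlonglongrightarrow> (\<Sum>j<J. norm (M (B j)))"
      by (intro tendsto_sum tendsto_norm Mlim B)
    moreover have "\<forall>n\<ge>0. (\<Sum>j<J. norm (Mn n (B j))) \<le> c" using bound_fin[OF B d] by blast
    ultimately show ?thesis by (intro LIMSEQ_le_const2) auto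
  qed
  have meas: "borel_vector_measure M"
    unfolding borel_vector_measure_def
  proof (intro allI impI)
    fix B :: "nat \<Rightarrow> 'a set"
    assume Br: "range B \<subseteq> sets borel" and d: "disjoint_family B"
    have B: "\<And>j. B j \<in> sets borel" using Br by auto
    have U: "(\<Union>n. B n) \<in> sets borel" using B by auto
    have sn: "summable (\<lambda>j. norm (M (B j)))"
      by (rule summableI_nonneg_bounded[where x=c]) (use Mfin[OF B d] in auto)
    hence s: "summable (\<lambda>j. M (B j))" by (rule summable_norm_cancel_gen)
    define S where "S = (\<Sum>j. M (B j))"
    have Ss: "(\<lambda>j. M (B j)) sums S" unfolding S_def using s by (rule summable_sums)
    have "(S - M (\<Union>n. B n)) \<bullet> e k = 0" for k
    proof -
      have "(\<lambda>j. M (B j) \<bullet> e k) sums (S \<bullet> e k)"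
        by (rule bounded_linear.sums[OF bounded_linear_inner_left Ss])
      hence "(\<lambda>j. \<mu> k (B j)) sums (S \<bullet> e k)" using Minner[OF B] by simp
      moreover have "(\<lambda>j. \<mu> k (B j)) sums \<mu> k (\<Union>n. B n)"
        using assms(2)[of k] Br d unfolding borel_vector_measure_def by blast
      ultimately have "S \<bullet> e k = \<mu> k (\<Union>n. B n)" by (rule sums_unique2)
      thus ?thesis using Minner[OF U] by (simp add: inner_diff_left)
    qed
    hence "S - M (\<Union>n. B n) = 0" by (rule total[OF cl])
    thus "(\<lambda>n. M (B n)) sums M (\<Union>n. B n)" using Ss by simp
  qed
  have tv: "total_variation M UNIV \<le> C'"
    unfolding total_variation_def
  proof (rule SUP_least)
    fix B assume "B \<in> {B :: nat \<Rightarrow> 'a set. range B \<subseteq> sets borel \<and> disjoint_family B \<and> (\<Union>n. B n) = UNIV}"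
    hence B: "\<And>j. B j \<in> sets borel" and d: "disjoint_family B" by auto
    show "(\<Sum>n. ennreal (norm (M (B n)))) \<le> C'"
    proof (rule suminf_le_const)
      fix n
      have "(\<Sum>j<n. ennreal (norm (M (B j)))) = ennreal (\<Sum>j<n. norm (M (B j)))" by simp
      also have "\<dots> \<le> ennreal c" using Mfin[OF B d] by (rule ennreal_leI)
      finally show "(\<Sum>j<n. ennreal (norm (M (B j)))) \<le> C'" using Cc by simp
    qed simp
  qed
  show ?thesis
  proof (intro exI conjI)
    show "borel_vector_measure M" by (rule meas)
    show "total_variation M UNIV \<le> (SUP n. total_variation (\<lambda>B. \<Sum>k<n. \<mu> k B *\<^sub>R e k) UNIV)"
      using tv unfolding C'_def Mn_def .
    thus "total_variation M UNIV < \<infinity>" using assms(3) by (rule le_less_trans)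
    show "\<forall>k. \<forall>B\<in>sets borel. M B \<bullet> e k = \<mu> k B" using Minner by blast
    show "\<forall>B\<in>sets borel. (\<lambda>k. \<mu> k B *\<^sub>R e k) sums M B" using Msums by blast
  qed
qed

end
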